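(* Let $l$, $m$, $n$ be positive integers such that $1<l<m\le n$. Then \[ \sum_{d=1}^n \mu(d)\, 2^{\lfloor\frac{n}{d} \rfloor - \lfloor \frac{n-1}{d} \rfloor + \lfloor\frac{m}{d} \rfloor - \lfloor \frac{m-1}{d} \rfloor + \lfloor\frac{l}{d} \rfloor - \lfloor \frac{l-1}{d} \rfloor} \] equals \[ \begin{cases} 4+ M(n) & \text{if } \gcd(l,m)=\gcd(l,n)=\gcd(m,n) =1, \\ 3+ M(n) & \text{if exactly two of the pairs } \{l,m\},\{l,n\},\{m,n\} \text{ are co-prime},\\ 2+ M(n) & \text{if exactly one of these pairs is co-prime},\\ 1 + M(n) & \text{if none of these pairs is co-prime and } \gcd(l,m,n)=1, \\ M(n) & \text{otherwise.} \end{cases} \]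
   Context: $\mu$ is the Möbius function and $M(n)=\sum_{d=1}^n\mu(d)$ is the Mertens function. $\lfloor x\rfloor$ is the floor of $x$. *)

theory Defs
  imports "HOL-Computational_Algebra.Computational_Algebra"
begin

definition moebius :: "nat \<Rightarrow> int" where
  "moebius d = (if squarefree d then (-1) ^ card (prime_factors d) else 0)"

definition mertens :: "nat \<Rightarrow> int" where
  "mertens n = (\<Sum>d = 1..n. moebius d)"

end

theory Submission
  imports Defs
begin

lemma prod_primes_nz: "finite S \<Longrightarrow> (\<And>p. p \<in> S \<Longrightarrow> prime (p::nat)) \<Longrightarrow> \<Prod>S \<noteq> 0"
  by (induction S rule: finite_induct) (auto simp: prime_gt_0_nat)

lemma pf_prod:
  assumes "finite S" "\<And>p. p \<in> S \<Longrightarrow> prime (p::nat)"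
  shows "prime_factorization (\<Prod>S) = mset_set S"
  using assms
proof (induction S rule: finite_induct)
  case empty then show ?case by simp
next
  case (insert x F)
  have "\<Prod>F \<noteq> 0" using insert.hyps(1) insert.prems by (intro prod_primes_nz) auto
  moreover have "x \<noteq> 0" using insert.prems[of x] by (auto simp: prime_gt_0_nat)
  ultimately show ?case using insert
    by (simp add: prime_factorization_mult prime_factorization_prime)
qed

lemma sf_prod:
  assumes "finite S" "\<And>p. p \<in> S \<Longrightarrow> prime (p::nat)"
  shows "squarefree (\<Prod>S)"
proof -
  have nz: "\<Prod>S \<noteq> 0" using assms by (rule prod_primes_nz)
  show ?thesis
    unfolding squarefree_factorial_semiring''[OF nz]
  proof (intro allI impI)
    fix p :: nat assume "prime p"
    then have "multiplicity p (\<Prod>S) = count (prime_factorization (\<Prod>S)) p"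
      by (simp add: count_prime_factorization_prime)
    also have "\<dots> \<le> 1" using pf_prod[OF assms] assms(1) by (simp add: count_mset_set')
    finally show "multiplicity p (\<Prod>S) \<le> 1" .
  qed
qed

lemma sf_pf:
  assumes "squarefree (d::nat)"
  shows "prime_factorization d = mset_set (prime_factors d)"
proof -
  have nz: "d \<noteq> 0" proof assume "d = 0" with assms show False by simp qed
  show ?thesis
  proof (rule multiset_eqI)
    fix p
    show "count (prime_factorization d) p = count (mset_set (prime_factors d)) p"
    proof (cases "prime p")
      case True
      then have "multiplicity p d \<le> 1" using assms squarefree_factorial_semiring''[OF nz] by blast
      moreover have "count (mset_set (prime_factors d)) p = (if p \<in> prime_factors d then 1 else 0)"
        by (simp only: count_mset_set' finite_set_mset simp_thms)
      moreover have "p \<in> prime_factors d \<longleftrightarrow> multiplicity p d > 0" using True nz by (simp add: prime_factors_multiplicity)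
      moreover have "count (prime_factorization d) p = multiplicity p d" by (simp add: count_prime_factorization_prime True)
      ultimately show ?thesis by auto
    next
      case False
      then show ?thesis by (auto simp: count_prime_factorization in_prime_factors_iff)
    qed
  qed
qed

lemma sf_eq:
  assumes "squarefree (d::nat)"
  shows "\<Prod>(prime_factors d) = d"
proof -
  have nz: "d \<noteq> 0" proof assume "d = 0" with assms show False by simp qed
  have "prime_factorization (\<Prod>(prime_factors d)) = prime_factorization d"
    using pf_prod[of "prime_factors d"] sf_pf[OF assms] by auto
  moreover have "\<Prod>(prime_factors d) \<noteq> 0" by (rule prod_primes_nz) auto
  ultimately show ?thesis using prime_factorization_unique[OF _ nz] by simp
qed

lemma pow_alt:
  assumes "finite A" "A \<noteq> {}"
  shows "(\<Sum>S\<in>Pow A. (-1::int) ^ card S) = 0"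
proof -
  obtain a where a: "a \<in> A" using assms by blast
  define B where "B = A - {a}"
  have A: "A = insert a B" "a \<notin> B" using a unfolding B_def by auto
  have fB: "finite B" using A assms by auto
  have "(\<Sum>S\<in>Pow A. (-1::int) ^ card S) = (\<Sum>S\<in>Pow B. (-1::int) ^ card S) + (\<Sum>S\<in>insert a ` Pow B. (-1::int) ^ card S)"
    unfolding A Pow_insert
    by (rule sum.union_disjoint) (use fB A in auto)
  also have "(\<Sum>S\<in>insert a ` Pow B. (-1::int) ^ card S) = (\<Sum>S\<in>Pow B. (-1::int) ^ card (insert a S))"
  proof -
    have "inj_on (insert a) (Pow B)"
    proof (rule inj_onI)
      fix X Y assume XY: "X \<in> Pow B" "Y \<in> Pow B" "insert a X = insert a Y"
      then have "a \<notin> X" "a \<notin> Y" using A(2) by auto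
      then show "X = Y" using XY(3) insert_ident by metis
    qed
    then show ?thesis by (simp add: sum.reindex)
  qed
  also have "\<dots> = (\<Sum>S\<in>Pow B. - ((-1::int) ^ card S))"
  proof (rule sum.cong[OF refl])
    fix X assume "X \<in> Pow B"
    then have "finite X" "a \<notin> X" using fB A(2) finite_subset by auto
    then show "(-1::int) ^ card (insert a X) = - ((-1) ^ card X)" by simp
  qed
  finally show ?thesis by (simp add: sum_negf)
qed


lemma mu_sum:
  assumes "k > (0::nat)"
  shows "(\<Sum>d | d dvd k. moebius d) = (if k = 1 then 1 else 0)"
proof -
  have fin: "finite {d. d dvd k}" using assms by simp
  have "(\<Sum>d | d dvd k. moebius d) = (\<Sum>d\<in>{d. d dvd k \<and> squarefree d}. moebius d)"
  proof (rule sum.mono_neutral_right[OF fin])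
    show "{d. d dvd k \<and> squarefree d} \<subseteq> {d. d dvd k}" by blast
    show "\<forall>i\<in>{d. d dvd k} - {d. d dvd k \<and> squarefree d}. moebius i = 0"
      by (simp add: moebius_def)
  qed
  also have "\<dots> = (\<Sum>S\<in>Pow (prime_factors k). (-1::int) ^ card S)"
  proof (rule sum.reindex_bij_witness[where j = "prime_factors" and i = "\<lambda>S. \<Prod>S"])
    fix d assume d: "d \<in> {d. d dvd k \<and> squarefree d}"
    then have dk: "d dvd k" and sd: "squarefree d" by simp_all
    show "\<Prod>(prime_factors d) = d" using sd by (rule sf_eq)
    have "prime_factors d \<subseteq> prime_factors k"
    proof
      fix p assume "p \<in> prime_factors d"
      then have "prime p" "p dvd d" by (simp_all add: in_prime_factors_iff)
      then have "prime p" "p dvd k" using dk dvd_trans by blast+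
      then show "p \<in> prime_factors k" using assms by (simp add: in_prime_factors_iff)
    qed
    then show "prime_factors d \<in> Pow (prime_factors k)" by simp
    show "(-1) ^ card (prime_factors d) = moebius d" using sd by (simp add: moebius_def)
  next
    fix S assume S: "S \<in> Pow (prime_factors k)"
    then have Ssub: "S \<subseteq> prime_factors k" by simp
    have fS: "finite S" using Ssub by (rule finite_subset) simp
    have pS: "\<And>p. p \<in> S \<Longrightarrow> prime p" using Ssub in_prime_factors_imp_prime by blast
    show "prime_factors (\<Prod>S) = S" using pf_prod[OF fS pS] fS by simp
    have "\<Prod>S dvd k"
    proof -
      have "mset_set S \<subseteq># prime_factorization k"
        unfolding subseteq_mset_def
      proof
        fix x show "count (mset_set S) x \<le> count (prime_factorization k) x"
        proof (cases "x \<in> S")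
          case True
          then have "x \<in># prime_factorization k" using Ssub by blast
          then have "count (prime_factorization k) x > 0" by simp
          then show ?thesis using True fS by (simp add: count_mset_set')
        next
          case False
          then show ?thesis by (simp add: count_mset_set')
        qed
      qed
      then have "prime_factorization (\<Prod>S) \<subseteq># prime_factorization k"
        using pf_prod[OF fS pS] by simp
      moreover have "\<Prod>S \<noteq> 0" using fS pS by (rule prod_primes_nz)
      ultimately show ?thesis by (simp add: prime_factorization_subset_imp_dvd)
    qed
    then show "\<Prod>S \<in> {d. d dvd k \<and> squarefree d}" using sf_prod[OF fS pS] by simp
  qed
  also have "\<dots> = (if k = 1 then 1 else 0)"
  proof (cases "k = 1")
    case True then show ?thesis by simp
  next
    case False
    then obtain p where "prime p" "p dvd k" using prime_factor_nat by blast
    then have "p \<in> prime_factors k" using assms by (simp add: in_prime_factors_iff)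
    then have ne: "prime_factors k \<noteq> {}" by blast
    show ?thesis using False pow_alt[OF finite_set_mset ne] by simp
  qed
  finally show ?thesis .
qed

lemma e_eq:
  assumes "k \<ge> 1" "d \<ge> 1"
  shows "nat (\<lfloor>real k / real d\<rfloor> - \<lfloor>real (k - 1) / real d\<rfloor>) = of_bool (d dvd k)"
proof -
  obtain j where k: "k = Suc j" using assms by (cases k) auto
  have "\<lfloor>real k / real d\<rfloor> = int (k div d)" by (rule floor_divide_of_nat_eq)
  moreover have "\<lfloor>real (k - 1) / real d\<rfloor> = int ((k - 1) div d)" by (rule floor_divide_of_nat_eq)
  ultimately show ?thesis using k by (auto simp: div_Suc mod_eq_0_iff_dvd)
qed

lemma D_eq:
  assumes "0 < a" "a \<le> n"
  shows "(\<Sum>d = 1..n. moebius d * of_bool (d dvd a)) = (if a = 1 then 1 else 0)"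
proof -
  have "(\<Sum>d = 1..n. moebius d * of_bool (d dvd a)) = (\<Sum>d \<in> {d\<in>{1..n}. d dvd a}. moebius d)"
    by (simp add: sum.inter_filter[symmetric] of_bool_def if_distrib cong: if_cong)
  also have "{d\<in>{1..n}. d dvd a} = {d. d dvd a}"
    using assms by (auto dest: dvd_imp_le intro: Suc_leI simp: dvd_pos_nat)
  finally show ?thesis using mu_sum[OF assms(1)] by simp
qed

theorem theorem4p2:
  fixes l m n :: nat
  assumes "1 < l" and "l < m" and "m \<le> n"
  defines "e \<equiv> \<lambda>k d::nat. nat (\<lfloor>real k / real d\<rfloor> - \<lfloor>real (k - 1) / real d\<rfloor>)"
  defines "c \<equiv> (of_bool (coprime l m) + of_bool (coprime l n) + of_bool (coprime m n) :: nat)"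
  shows "(\<Sum>d = 1..n. moebius d * 2 ^ (e n d + e m d + e l d)) =
    (if c = 3 then 4 + mertens n
     else if c = 2 then 3 + mertens n
     else if c = 1 then 2 + mertens n
     else if gcd l (gcd m n) = 1 then 1 + mertens n
     else mertens n)"
proof -
  note lm = assms(2) and mn = assms(3) and l1 = assms(1)
  have p: "0 < l" "0 < m" "0 < n" using l1 lm mn by linarith+
  define D where "D a = (\<Sum>d = 1..n. moebius d * of_bool (d dvd a))" for a
  have DD: "D a = (if a = 1 then 1 else 0)" if "0 < a" "a \<le> n" for a
    using D_eq[OF that] unfolding D_def .
  have ek: "e k d = of_bool (d dvd k)" if "k \<ge> 1" "d \<ge> 1" for k d
    unfolding e_def using e_eq[OF that] .
  have termeq: "moebius d * 2 ^ (e n d + e m d + e l d) =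
     moebius d + moebius d * of_bool (d dvd n) + moebius d * of_bool (d dvd m) + moebius d * of_bool (d dvd l)
     + moebius d * of_bool (d dvd gcd l m) + moebius d * of_bool (d dvd gcd l n) + moebius d * of_bool (d dvd gcd m n)
     + moebius d * of_bool (d dvd gcd l (gcd m n))" if "d \<in> {1..n}" for d
  proof -
    have d1: "d \<ge> 1" using that by simp
    have E: "e n d = of_bool (d dvd n)" "e m d = of_bool (d dvd m)" "e l d = of_bool (d dvd l)"
      using ek[OF _ d1] p by simp_all
    show ?thesis unfolding E
      by (cases "d dvd n"; cases "d dvd m"; cases "d dvd l") (simp_all add: algebra_simps)
  qed
  have "(\<Sum>d = 1..n. moebius d * 2 ^ (e n d + e m d + e l d)) =
     (\<Sum>d = 1..n. moebius d + moebius d * of_bool (d dvd n) + moebius d * of_bool (d dvd m) + moebius d * of_bool (d dvd l)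
     + moebius d * of_bool (d dvd gcd l m) + moebius d * of_bool (d dvd gcd l n) + moebius d * of_bool (d dvd gcd m n)
     + moebius d * of_bool (d dvd gcd l (gcd m n)))"
    by (rule sum.cong[OF refl]) (rule termeq)
  also have "\<dots> =
     mertens n + D n + D m + D l + D (gcd l m) + D (gcd l n) + D (gcd m n) + D (gcd l (gcd m n))"
    unfolding D_def mertens_def by (simp only: sum.distrib)
  also have "\<dots> = mertens n + of_bool (coprime l m) + of_bool (coprime l n) + of_bool (coprime m n)
      + of_bool (gcd l (gcd m n) = 1)"
  proof -
    have g: "gcd l m \<le> l" "gcd l n \<le> l" "gcd m n \<le> n" "gcd l (gcd m n) \<le> l"
      using p by (simp_all add: gcd_le1_nat gcd_le2_nat)
    have le: "gcd l m \<le> n" "gcd l n \<le> n" "gcd m n \<le> n" "gcd l (gcd m n) \<le> n"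
      using g lm mn by linarith+
    have gp: "0 < gcd l m" "0 < gcd l n" "0 < gcd m n" "0 < gcd l (gcd m n)"
      using p by simp_all
    have ne: "l \<noteq> 1" "m \<noteq> 1" "n \<noteq> 1" "l \<le> n" "m \<le> n" using l1 lm mn by linarith+
    have d1: "D n = 0" "D m = 0" "D l = 0"
      using DD[OF p(3) order.refl] DD[OF p(2) ne(5)] DD[OF p(1) ne(4)] ne(1-3) by simp_all
    have d2: "D (gcd l m) = of_bool (coprime l m)" "D (gcd l n) = of_bool (coprime l n)"
      "D (gcd m n) = of_bool (coprime m n)" "D (gcd l (gcd m n)) = of_bool (gcd l (gcd m n) = 1)"
      using DD[OF gp(1) le(1)] DD[OF gp(2) le(2)] DD[OF gp(3) le(3)] DD[OF gp(4) le(4)]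
      by (simp_all only: coprime_iff_gcd_eq_1 of_bool_def)
    show ?thesis unfolding d1 d2 by simp
  qed
  also have "\<dots> = (if c = 3 then 4 + mertens n
     else if c = 2 then 3 + mertens n
     else if c = 1 then 2 + mertens n
     else if gcd l (gcd m n) = 1 then 1 + mertens n
     else mertens n)"
  proof -
    have h1: "gcd l (gcd m n) = gcd (gcd l m) n" by (simp only: gcd.assoc)
    have h2: "gcd l (gcd m n) = gcd (gcd l n) m" by (simp only: gcd.assoc gcd.commute[of m n])
    have g1: "gcd l (gcd m n) = 1" if "coprime l m \<or> coprime l n \<or> coprime m n"
      using that h1 h2 unfolding coprime_iff_gcd_eq_1 by auto
    show ?thesis unfolding c_def
      using g1 by (cases "coprime l m"; cases "coprime l n"; cases "coprime m n") simp_all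
  qed
  finally show ?thesis .
qed

end
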